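(* For every $N\in\mathbb{N}$ there exists $L\in\mathbb{N}$ and an integer $n\geq N$ such that $\Delta_\ell(n)<0$ for all $\ell\geq L$.
   Context: For integers $n\geq 0$ let $S_n$ be the symmetric group on $n$ elements ($S_0$ trivial). For an integer $\ell\geq 1$ let $C_{\ell,n}=\{(\pi_1,\dots,\pi_\ell)\in S_n^\ell : \pi_j\pi_k=\pi_k\pi_j \text{ for all } 1\le j,k\le \ell\}$ and $N_\ell(n)=|C_{\ell,n}|/|S_n|$ (so $N_\ell(0)=1$). Define $\Delta_\ell(n)=N_\ell(n)^2-N_\ell(n-1)N_\ell(n+1)$ for $n\geq 1$. *)

theory Defs
  imports Complex_Main "HOL-Combinatorics.Permutations"
begin

definition Sym :: "nat \<Rightarrow> (nat \<Rightarrow> nat) set" where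
  "Sym n = {p. p permutes {..<n}}"

definition commuting_tuples :: "nat \<Rightarrow> nat \<Rightarrow> (nat \<Rightarrow> nat) list set" where
  "commuting_tuples l n = {ps. length ps = l \<and> set ps \<subseteq> Sym n \<and>
      (\<forall>j<l. \<forall>k<l. ps ! j \<circ> ps ! k = ps ! k \<circ> ps ! j)}"

definition Ncomm :: "nat \<Rightarrow> nat \<Rightarrow> real" where
  "Ncomm l n = real (card (commuting_tuples l n)) / real (card (Sym n))"

definition Delta :: "nat \<Rightarrow> nat \<Rightarrow> real" where
  "Delta l n = (Ncomm l n)^2 - Ncomm l (n - 1) * Ncomm l (n + 1)"

end

theory Submission
  imports Defs
begin

lemma cube_bound: "c \<noteq> 3 \<Longrightarrow> 9 * (c::nat)^3 \<le> 8 * 3^c"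
proof -
  assume c3: "c \<noteq> 3"
  have big: "9 * c^3 \<le> 8 * 3^c" if "c \<ge> 4" for c :: nat
    using that
  proof (induction c rule: dec_induct)
    case base then show ?case by simp
  next
    case (step m)
    have "3*m^2 + 3*m + 1 \<le> m^3"
    proof -
      have "m^3 = m*m*m" by (simp add: power3_eq_cube)
      also have "\<dots> \<ge> 4*m*m" using step(1) by (simp add: mult_right_mono)
      finally have "4*m*m \<le> m^3" .
      moreover have "3*m+1 \<le> m*m" proof -
        have "4*m \<le> m*m" using step(1) by (simp add: mult_right_mono)
        then show ?thesis using step(1) by linarith
      qed
      ultimately show ?thesis by (simp add: power2_eq_square)
    qed
    then have "(Suc m)^3 \<le> 2 * m^3" by (simp add: power3_eq_cube power2_eq_square algebra_simps)
    then have "9 * (Suc m)^3 \<le> 2 * (9 * m^3)" by simp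
    also have "\<dots> \<le> 2 * (8 * 3^m)" using step(3) by simp
    also have "\<dots> \<le> 8 * 3 ^ Suc m" by simp
    finally show ?case .
  qed
  show ?thesis
  proof (cases "c \<ge> 4")
    case True then show ?thesis by (rule big)
  next
    case False
    then have "c = 0 \<or> c = 1 \<or> c = 2" using c3 by linarith
    then show ?thesis by auto
  qed
qed

lemma cube_bound3: "(c::nat)^3 \<le> 3^c"
  using cube_bound[of c] by (cases "c = 3") auto


inductive_set genr :: "(nat \<Rightarrow> nat) set \<Rightarrow> (nat \<Rightarrow> nat) set" for P where
  gid: "id \<in> genr P"
| gstep: "g \<in> genr P \<Longrightarrow> p \<in> P \<Longrightarrow> p \<circ> g \<in> genr P"

lemma genr_sym1:
  assumes P: "P \<subseteq> Sym n"
  shows "g \<in> genr P \<Longrightarrow> g \<in> Sym n"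
proof (induction rule: genr.induct)
  case gid then show ?case unfolding Sym_def using permutes_id by blast
next
  case (gstep g p)
  then have "p permutes {..<n}" "g permutes {..<n}" using P by (auto simp: Sym_def)
  then show ?case unfolding Sym_def using permutes_compose by blast
qed

lemma genr_sym: "P \<subseteq> Sym n \<Longrightarrow> genr P \<subseteq> Sym n"
  using genr_sym1 by blast

lemma genr_comm1:
  assumes comm: "\<forall>a\<in>P. \<forall>b\<in>P. a \<circ> b = b \<circ> a"
  shows "g \<in> genr P \<Longrightarrow> p \<in> P \<Longrightarrow> p \<circ> g = g \<circ> p"
proof (induction rule: genr.induct)
  case gid then show ?case by simp
next
  case (gstep g q)
  have "p \<circ> (q \<circ> g) = (p \<circ> q) \<circ> g" by (simp add: o_assoc)
  also have "\<dots> = (q \<circ> p) \<circ> g" using comm gstep by metis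
  also have "\<dots> = q \<circ> (g \<circ> p)" using gstep by (metis comp_assoc)
  finally show ?case by (metis comp_assoc)
qed

lemma genr_comm:
  assumes comm: "\<forall>a\<in>P. \<forall>b\<in>P. a \<circ> b = b \<circ> a" and g: "g \<in> genr P"
  shows "h \<in> genr P \<Longrightarrow> g \<circ> h = h \<circ> g"
proof (induction rule: genr.induct)
  case gid then show ?case by simp
next
  case (gstep h q)
  have "g \<circ> (q \<circ> h) = (g \<circ> q) \<circ> h" by (simp add: o_assoc)
  also have "\<dots> = (q \<circ> g) \<circ> h" using genr_comm1[OF comm g gstep(2)] by simp
  also have "\<dots> = q \<circ> (h \<circ> g)" using gstep by (metis comp_assoc)
  finally show ?case by (metis comp_assoc)
qed

lemma genr_mult: "g \<in> genr P \<Longrightarrow> h \<in> genr P \<Longrightarrow> g \<circ> h \<in> genr P"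
  by (induction rule: genr.induct) (auto, metis comp_assoc genr.gstep)

lemma finite_Sym: "finite (Sym n)"
  unfolding Sym_def by (rule finite_permutations) simp

lemma card_Sym: "card (Sym n) = fact n"
  unfolding Sym_def by (rule card_permutations) simp_all

lemma genr_inv:
  assumes P: "P \<subseteq> Sym n" and g: "g \<in> genr P"
  shows "\<exists>h\<in>genr P. h \<circ> g = id"
proof -
  have fin: "finite (genr P)" using genr_sym[OF P] finite_Sym finite_subset by blast
  have gp: "g permutes {..<n}" using genr_sym[OF P] g by (auto simp: Sym_def)
  have "surj g" using gp permutes_surj by blast
  have inj: "inj_on (\<lambda>h. h \<circ> g) (genr P)"
  proof (rule inj_onI)
    fix h h' :: "nat \<Rightarrow> nat" assume "h \<circ> g = h' \<circ> g"
    then show "h = h'" using \<open>surj g\<close> by (metis fun.map_comp surj_fun_eq)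
  qed
  have sub: "(\<lambda>h. h \<circ> g) ` genr P \<subseteq> genr P" using g genr_mult by blast
  have "(\<lambda>h. h \<circ> g) ` genr P = genr P" using endo_inj_surj[OF fin sub inj] .
  then have "id \<in> (\<lambda>h. h \<circ> g) ` genr P" using genr.gid by simp
  then show ?thesis by (metis imageE)
qed


lemma prod_bound:
  assumes fin: "finite I" and i0: "i0 \<in> I" and f3: "f i0 \<noteq> (3::nat)"
  shows "9 * (\<Prod>i\<in>I. f i)^3 \<le> 8 * 3^(\<Sum>i\<in>I. f i)"
proof -
  have "(\<Prod>i\<in>I. f i)^3 = (\<Prod>i\<in>I. f i ^ 3)" by (simp add: prod_power_distrib)
  also have "\<dots> = f i0 ^ 3 * (\<Prod>i\<in>I - {i0}. f i ^ 3)" using fin i0 by (simp add: prod.remove)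
  finally have e1: "(\<Prod>i\<in>I. f i)^3 = f i0 ^ 3 * (\<Prod>i\<in>I - {i0}. f i ^ 3)" .
  have "(3::nat)^(\<Sum>i\<in>I. f i) = (\<Prod>i\<in>I. 3 ^ f i)" by (simp add: power_sum)
  also have "\<dots> = 3 ^ f i0 * (\<Prod>i\<in>I - {i0}. 3 ^ f i)" using fin i0 by (simp add: prod.remove)
  finally have e2: "(3::nat)^(\<Sum>i\<in>I. f i) = 3 ^ f i0 * (\<Prod>i\<in>I - {i0}. 3 ^ f i)" .
  have r: "(\<Prod>i\<in>I - {i0}. f i ^ 3) \<le> (\<Prod>i\<in>I - {i0}. 3 ^ f i)"
    by (rule prod_mono) (simp add: cube_bound3)
  have "9 * f i0 ^ 3 \<le> 8 * 3 ^ f i0" using cube_bound[OF f3] .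
  then have "9 * f i0 ^ 3 * (\<Prod>i\<in>I - {i0}. f i ^ 3) \<le> 8 * 3 ^ f i0 * (\<Prod>i\<in>I - {i0}. 3 ^ f i)"
    using r by (rule mult_mono) simp_all
  then show ?thesis using e1 e2 by (simp add: mult.assoc)
qed

lemma key:
  assumes P: "P \<subseteq> Sym n" and comm: "\<forall>a\<in>P. \<forall>b\<in>P. a \<circ> b = b \<circ> a"
    and n3: "n mod 3 \<noteq> 0"
  shows "9 * card (genr P)^3 \<le> 8 * 3^n"
proof -
  define G where "G = genr P"
  define orb where "orb x = (\<lambda>g. g x) ` G" for x
  have GS: "G \<subseteq> Sym n" unfolding G_def using genr_sym[OF P] .
  have finG: "finite G" using GS finite_Sym finite_subset by blast
  have O1: "x \<in> orb x" for x unfolding orb_def G_def using genr.gid[of P] by (metis id_apply image_eqI)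
  have O2: "orb y \<subseteq> orb x" if yx: "y \<in> orb x" for x y
  proof
    fix z assume "z \<in> orb y"
    then obtain h where h: "h \<in> G" "z = h y" unfolding orb_def by auto
    obtain g where g: "g \<in> G" "y = g x" using yx unfolding orb_def by auto
    have "h \<circ> g \<in> G" using h g genr_mult unfolding G_def by blast
    moreover have "z = (h \<circ> g) x" using h g by simp
    ultimately show "z \<in> orb x" unfolding orb_def by blast
  qed
  have O3: "x \<in> orb y" if yx: "y \<in> orb x" for x y
  proof -
    obtain g where g: "g \<in> G" "y = g x" using yx unfolding orb_def by auto
    obtain h where h: "h \<in> G" "h \<circ> g = id" using genr_inv[OF P] g unfolding G_def by blast
    have "x = h y" using h g by (metis comp_apply id_apply)
    then show ?thesis using h unfolding orb_def by blast
  qed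
  have O4: "orb y = orb x" if "y \<in> orb x" for x y
    using O2 O3 that by (meson subset_antisym)
  have O5: "orb x \<subseteq> {..<n}" if "x < n" for x
  proof
    fix z assume "z \<in> orb x"
    then obtain g where g: "g \<in> G" "z = g x" unfolding orb_def by auto
    have "g permutes {..<n}" using g GS by (auto simp: Sym_def)
    then show "z \<in> {..<n}" using g that permutes_in_image by fastforce
  qed
  have finO: "finite (orb x)" for x unfolding orb_def using finG by simp
  define Os where "Os = orb ` {..<n}"
  have finOs: "finite Os" unfolding Os_def by simp
  have U: "\<Union>Os = {..<n}" unfolding Os_def using O1 O5 by blast
  have disj: "pairwise disjnt Os"
    unfolding pairwise_def disjnt_def Os_def
  proof (intro ballI impI)
    fix A B assume "A \<in> orb ` {..<n}" "B \<in> orb ` {..<n}" "A \<noteq> B"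
    then obtain a b where ab: "A = orb a" "B = orb b" by auto
    show "A \<inter> B = {}"
    proof (rule ccontr)
      assume "A \<inter> B \<noteq> {}"
      then obtain z where "z \<in> orb a" "z \<in> orb b" using ab by auto
      then have "orb a = orb b" using O4 by metis
      then show False using ab \<open>A \<noteq> B\<close> by simp
    qed
  qed
  have nsum: "n = (\<Sum>Q\<in>Os. card Q)"
  proof -
    have "card (\<Union>Os) = (\<Sum>Q\<in>Os. card Q)"
      by (rule card_Union_disjoint[OF disj]) (auto simp: Os_def finO)
    then show ?thesis using U by simp
  qed
  obtain O0 where O0: "O0 \<in> Os" "card O0 \<noteq> 3"
  proof (rule ccontr)
    assume "\<not> thesis"
    then have "\<forall>Q\<in>Os. card Q = 3" using that by blast
    then have "n = 3 * card Os" using nsum by simp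
    then show False using n3 by simp
  qed
  define rep where "rep Q = (SOME x. x \<in> Q)" for Q :: "nat set"
  have rep: "rep Q \<in> Q" "orb (rep Q) = Q" if QO: "Q \<in> Os" for Q
  proof -
    obtain x where x: "Q = orb x" using QO unfolding Os_def by auto
    show "rep Q \<in> Q" unfolding rep_def using x O1 by (metis someI_ex)
    then show "orb (rep Q) = Q" using O4 x by blast
  qed
  define Phi where "Phi a = (\<lambda>Q\<in>Os. a (rep Q))" for a :: "nat \<Rightarrow> nat"
  have img: "Phi ` G \<subseteq> PiE Os (\<lambda>Q. Q)"
  proof
    fix z assume "z \<in> Phi ` G"
    then obtain a where a: "a \<in> G" "z = Phi a" by auto
    have "a (rep Q) \<in> Q" if "Q \<in> Os" for Q
    proof -
      have "a (rep Q) \<in> orb (rep Q)" unfolding orb_def using a by blast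
      then show ?thesis using rep[OF that] by simp
    qed
    then show "z \<in> PiE Os (\<lambda>Q. Q)" using a unfolding Phi_def by auto
  qed
  have inj: "inj_on Phi G"
  proof (rule inj_onI)
    fix a b assume a: "a \<in> G" and b: "b \<in> G" and eq: "Phi a = Phi b"
    show "a = b"
    proof
      fix x
      show "a x = b x"
      proof (cases "x < n")
        case True
        define Q where "Q = orb x"
        have OO: "Q \<in> Os" unfolding Q_def Os_def using True by simp
        have abr: "a (rep Q) = b (rep Q)" using eq OO unfolding Phi_def by (metis restrict_apply')
        have "x \<in> orb (rep Q)" using rep[OF OO] Q_def O1 by simp
        then obtain g where g: "g \<in> G" "x = g (rep Q)" unfolding orb_def by auto
        have ca: "a \<circ> g = g \<circ> a" using genr_comm[OF comm] a g unfolding G_def by blast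
        have cb: "b \<circ> g = g \<circ> b" using genr_comm[OF comm] b g unfolding G_def by blast
        have "a x = g (a (rep Q))" using ca g by (metis comp_apply)
        also have "\<dots> = g (b (rep Q))" using abr by simp
        also have "\<dots> = b x" using cb g by (metis comp_apply)
        finally show ?thesis .
      next
        case False
        have "a permutes {..<n}" "b permutes {..<n}" using a b GS by (auto simp: Sym_def)
        then show ?thesis using False by (simp add: permutes_not_in)
      qed
    qed
  qed
  have "finite (PiE Os (\<lambda>Q. Q))" using finOs finO by (intro finite_PiE) (auto simp: Os_def)
  then have "card G \<le> card (PiE Os (\<lambda>Q. Q))"
    using card_inj_on_le[OF inj img] by blast
  also have "\<dots> = (\<Prod>Q\<in>Os. card Q)" using finOs by (simp add: card_PiE)
  finally have cG: "card G \<le> (\<Prod>Q\<in>Os. card Q)" .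
  have "9 * card G ^ 3 \<le> 9 * (\<Prod>Q\<in>Os. card Q) ^ 3" using cG by (simp add: power_mono)
  also have "\<dots> \<le> 8 * 3 ^ (\<Sum>Q\<in>Os. card Q)" using prod_bound[of Os O0 card, OF finOs O0] .
  finally show ?thesis using nsum G_def by simp
qed


lemma finite_ct: "finite (commuting_tuples l n)"
proof -
  have "commuting_tuples l n \<subseteq> {xs. set xs \<subseteq> Sym n \<and> length xs = l}"
    unfolding commuting_tuples_def by auto
  moreover have "finite {xs. set xs \<subseteq> Sym n \<and> length xs = l}"
    using finite_lists_length_eq[OF finite_Sym] .
  ultimately show ?thesis by (rule finite_subset)
qed

lemma ct_in_abelian:
  assumes ps: "ps \<in> commuting_tuples l n" and n3: "n mod 3 \<noteq> 0"
  shows "\<exists>A. set ps \<subseteq> A \<and> A \<subseteq> Sym n \<and> 9 * card A ^ 3 \<le> 8 * 3^n"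
proof -
  have len: "length ps = l" and S: "set ps \<subseteq> Sym n"
    and c: "\<forall>j<l. \<forall>k<l. ps ! j \<circ> ps ! k = ps ! k \<circ> ps ! j"
    using ps unfolding commuting_tuples_def by auto
  have comm: "\<forall>a\<in>set ps. \<forall>b\<in>set ps. a \<circ> b = b \<circ> a"
    using c len by (metis in_set_conv_nth)
  have sub: "set ps \<subseteq> genr (set ps)"
  proof
    fix p assume "p \<in> set ps"
    then have "p \<circ> id \<in> genr (set ps)" by (rule genr.gstep[OF genr.gid])
    then show "p \<in> genr (set ps)" by simp
  qed
  show ?thesis
    using sub genr_sym[OF S] key[OF S comm n3] by blast
qed

lemma upper:
  assumes n3: "n mod 3 \<noteq> 0"
  shows "\<exists>T m. 9 * m^3 \<le> 8 * 3^n \<and> (\<forall>l. card (commuting_tuples l n) \<le> T * m^l)"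
proof -
  define AA where "AA = {A. A \<subseteq> Sym n \<and> 9 * card A ^ 3 \<le> 8 * 3^n}"
  have finAA: "finite AA" unfolding AA_def using finite_Sym by (simp add: finite_Collect_subsets)
  define m where "m = Max (insert 0 (card ` AA))"
  have m_in: "m \<in> insert 0 (card ` AA)" unfolding m_def using finAA by (intro Max_in) auto
  have m9: "9 * m^3 \<le> 8 * 3^n" using m_in unfolding AA_def by auto
  have m_ge: "card A \<le> m" if "A \<in> AA" for A unfolding m_def using finAA that by (intro Max_ge) auto
  have "card (commuting_tuples l n) \<le> card AA * m^l" for l
  proof -
    have "commuting_tuples l n \<subseteq> (\<Union>A\<in>AA. {xs. set xs \<subseteq> A \<and> length xs = l})"
    proof
      fix ps assume ps: "ps \<in> commuting_tuples l n"
      then obtain A where "set ps \<subseteq> A" "A \<subseteq> Sym n" "9 * card A ^ 3 \<le> 8 * 3^n"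
        using ct_in_abelian[OF ps n3] by blast
      moreover have "length ps = l" using ps unfolding commuting_tuples_def by auto
      ultimately show "ps \<in> (\<Union>A\<in>AA. {xs. set xs \<subseteq> A \<and> length xs = l})"
        unfolding AA_def by blast
    qed
    then have "card (commuting_tuples l n) \<le> card (\<Union>A\<in>AA. {xs. set xs \<subseteq> A \<and> length xs = l})"
      using finAA by (intro card_mono) (auto intro!: finite_lists_length_eq simp: AA_def intro: finite_subset[OF _ finite_Sym])
    also have "\<dots> \<le> (\<Sum>A\<in>AA. card {xs. set xs \<subseteq> A \<and> length xs = l})"
      using card_UN_le[OF finAA] .
    also have "\<dots> = (\<Sum>A\<in>AA. card A ^ l)"
      by (rule sum.cong) (auto simp: AA_def intro!: card_lists_length_eq intro: finite_subset[OF _ finite_Sym])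
    also have "\<dots> \<le> (\<Sum>A\<in>AA. m ^ l)"
      by (rule sum_mono) (simp add: m_ge power_mono)
    also have "\<dots> = card AA * m^l" by simp
    finally show ?thesis .
  qed
  then show ?thesis using m9 by blast
qed


definition rot :: "nat \<Rightarrow> (nat \<Rightarrow> nat) \<Rightarrow> nat \<Rightarrow> nat" where
  "rot k c x = (if x < 3*k then 3*(x div 3) + (x mod 3 + c (x div 3)) mod 3
     else if x < 3*k+2 then 3*k + (x - 3*k + c k) mod 2 else x)"

lemma rot_comp: "rot k c (rot k d x) = rot k (\<lambda>i. d i + c i) x"
proof -
  consider "x < 3*k" | "3*k \<le> x" "x < 3*k+2" | "3*k+2 \<le> x" by linarith
  then show ?thesis
  proof cases
    case 1
    define q where "q = x div 3"
    define s where "s = (x mod 3 + d q) mod 3"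
    have s3: "s < 3" unfolding s_def by simp
    have qk: "q < k" using 1 unfolding q_def by linarith
    have y: "rot k d x = 3*q + s" unfolding rot_def s_def q_def using 1 by simp
    have yk: "3*q + s < 3*k" using qk s3 by linarith
    have yd: "(3*q+s) div 3 = q" and ym: "(3*q+s) mod 3 = s" using s3 by auto
    have "rot k c (3*q+s) = 3*q + (s + c q) mod 3" unfolding rot_def using yk yd ym by simp
    also have "(s + c q) mod 3 = (x mod 3 + (d q + c q)) mod 3" unfolding s_def by (simp add: mod_add_left_eq add.assoc)
    finally have l: "rot k c (rot k d x) = 3*q + (x mod 3 + (d q + c q)) mod 3" using y by simp
    have r: "rot k (\<lambda>i. d i + c i) x = 3*q + (x mod 3 + (d q + c q)) mod 3"
      using 1 unfolding rot_def q_def by simp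
    show ?thesis using l r by simp
  next
    case 2
    define s where "s = (x - 3*k + d k) mod 2"
    have s2: "s < 2" unfolding s_def by simp
    have y: "rot k d x = 3*k + s" unfolding rot_def s_def using 2 by simp
    have "rot k c (3*k+s) = 3*k + (s + c k) mod 2" unfolding rot_def using s2 by simp
    also have "(s + c k) mod 2 = (x - 3*k + (d k + c k)) mod 2" unfolding s_def by (simp add: mod_add_left_eq add.assoc)
    finally have l: "rot k c (rot k d x) = 3*k + (x - 3*k + (d k + c k)) mod 2" using y by simp
    have r: "rot k (\<lambda>i. d i + c i) x = 3*k + (x - 3*k + (d k + c k)) mod 2"
      using 2 unfolding rot_def by simp
    show ?thesis using l r by simp
  next
    case 3
    then show ?thesis unfolding rot_def by simp
  qed
qed

lemma rot_id: "(\<And>i. c i mod 6 = 0) \<Longrightarrow> rot k c x = x"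
proof -
  assume h: "\<And>i. c i mod 6 = 0"
  have a: "c i mod 3 = 0" "c i mod 2 = 0" for i using h[of i] by (auto simp: mod_mod_cancel[of 3 6, symmetric] mod_mod_cancel[of 2 6, symmetric])
  consider "x < 3*k" | "3*k \<le> x" "x < 3*k+2" | "3*k+2 \<le> x" by linarith
  then show ?thesis
  proof cases
    case 1
    then show ?thesis unfolding rot_def using a by (simp add: mod_add_right_eq[symmetric])
  next
    case 2
    have e: "rot k c x = 3*k + (x - 3*k + c k) mod 2" using 2 unfolding rot_def by simp
    have b: "(x - 3*k + c k) mod 2 = (x - 3*k) mod 2" by (metis a(2) add.right_neutral mod_add_right_eq)
    have "(x - 3*k) mod 2 = x - 3*k" using 2 by simp
    then show ?thesis using e b 2 by simp
  next
    case 3 then show ?thesis unfolding rot_def by simp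
  qed
qed

definition rinv :: "(nat \<Rightarrow> nat) \<Rightarrow> nat \<Rightarrow> nat" where
  "rinv c i = 6 - c i mod 6"

lemma rinv_mod: "(a + (6 - a mod 6)) mod 6 = (0::nat)" "((6 - a mod 6) + a) mod 6 = (0::nat)"
proof -
  have e: "a + (6 - a mod 6) = (a div 6) * 6 + 6" using div_mult_mod_eq[of a 6] mod_less_divisor[of 6 a] by linarith
  show "(a + (6 - a mod 6)) mod 6 = (0::nat)" unfolding e by simp
  show "((6 - a mod 6) + a) mod 6 = (0::nat)" unfolding add.commute[of "6 - a mod 6"] e by simp
qed

lemma rot_inv1: "rot k c (rot k (rinv c) x) = x"
  unfolding rot_comp by (rule rot_id) (simp only: rinv_def rinv_mod)

lemma rot_inv2: "rot k (rinv c) (rot k c x) = x"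
  unfolding rot_comp by (rule rot_id) (simp only: rinv_def rinv_mod)

lemma rot_out: "3*k+2 \<le> x \<Longrightarrow> rot k c x = x"
  unfolding rot_def by simp

lemma rot_out0: "c k = 0 \<Longrightarrow> 3*k \<le> x \<Longrightarrow> rot k c x = x"
  unfolding rot_def by auto

lemma rot_permutes_gen:
  assumes "\<And>x. x \<notin> S \<Longrightarrow> rot k c x = x"
  shows "rot k c permutes S"
  unfolding permutes_def
proof (intro conjI allI impI)
  fix x assume "x \<notin> S" then show "rot k c x = x" by (rule assms)
next
  fix y show "\<exists>!x. rot k c x = y"
    by (metis rot_inv1 rot_inv2)
qed

lemma rot_commute: "rot k c \<circ> rot k d = rot k d \<circ> rot k c"
  by (rule ext) (simp add: rot_comp add.commute)

lemma lower_gen: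
  assumes "A \<subseteq> Sym m" "\<forall>a\<in>A. \<forall>b\<in>A. a \<circ> b = b \<circ> a"
  shows "card A ^ l \<le> card (commuting_tuples l m)"
proof -
  have finA: "finite A" using assms(1) finite_Sym finite_subset by blast
  have "{xs. set xs \<subseteq> A \<and> length xs = l} \<subseteq> commuting_tuples l m"
  proof
    fix xs assume "xs \<in> {xs. set xs \<subseteq> A \<and> length xs = l}"
    then have xs: "set xs \<subseteq> A" "length xs = l" by auto
    have "\<forall>j<l. \<forall>k<l. xs ! j \<circ> xs ! k = xs ! k \<circ> xs ! j"
    proof (intro allI impI)
      fix j k assume "j < l" "k < l"
      then have "xs ! j \<in> A" "xs ! k \<in> A" using xs by (auto dest: nth_mem)
      then show "xs ! j \<circ> xs ! k = xs ! k \<circ> xs ! j" using assms(2) by blast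
    qed
    then show "xs \<in> commuting_tuples l m" unfolding commuting_tuples_def using xs assms(1) by auto
  qed
  then have "card {xs. set xs \<subseteq> A \<and> length xs = l} \<le> card (commuting_tuples l m)"
    by (intro card_mono finite_ct)
  then show ?thesis using card_lists_length_eq[OF finA] by simp
qed

lemma rot_inj:
  assumes "c \<in> PiE {..k} B" "d \<in> PiE {..k} B" "\<And>i. i < k \<Longrightarrow> B i \<subseteq> {..<3}"
    "B k \<subseteq> {..<2}" "rot k c = rot k d"
  shows "c = d"
proof (rule PiE_ext[OF assms(1,2)])
  fix i assume i: "i \<in> {..k}"
  show "c i = d i"
  proof (cases "i < k")
    case True
    have "rot k c (3*i) = rot k d (3*i)" using assms(5) by simp
    then have "c i mod 3 = d i mod 3" unfolding rot_def using True by simp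
    moreover have "c i \<in> B i" "d i \<in> B i" using PiE_mem[OF assms(1)] PiE_mem[OF assms(2)] i by auto
    then have "c i < 3" "d i < 3" using assms(3)[OF True] by auto
    ultimately show ?thesis by simp
  next
    case False
    then have ik: "i = k" using i by simp
    have "rot k c (3*k) = rot k d (3*k)" using assms(5) by simp
    then have "c k mod 2 = d k mod 2" unfolding rot_def by simp
    moreover have "c k \<in> B k" "d k \<in> B k" using PiE_mem[OF assms(1)] PiE_mem[OF assms(2)] by auto
    then have "c k < 2" "d k < 2" using assms(4) by auto
    ultimately show ?thesis using ik by simp
  qed
qed

lemma lower1: "(3^k)^l \<le> card (commuting_tuples l (3*k))"
proof -
  define B where "B i = (if i < k then {..<3} else {0::nat})" for i
  define A where "A = rot k ` PiE {..k} B"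
  have sub: "A \<subseteq> Sym (3*k)"
  proof
    fix p assume "p \<in> A"
    then obtain c where c: "c \<in> PiE {..k} B" "p = rot k c" unfolding A_def by auto
    have "c k \<in> B k" using PiE_mem[OF c(1)] by simp
    then have "c k = 0" unfolding B_def by simp
    then have "rot k c permutes {..<3*k}" by (intro rot_permutes_gen) (simp add: rot_out0)
    then show "p \<in> Sym (3*k)" using c unfolding Sym_def by simp
  qed
  have comm: "\<forall>a\<in>A. \<forall>b\<in>A. a \<circ> b = b \<circ> a" unfolding A_def using rot_commute by blast
  have inj: "inj_on (rot k) (PiE {..k} B)"
    by (rule inj_onI, rule rot_inj) (auto simp: B_def)
  have "card A = card (PiE {..k} B)" unfolding A_def using inj by (rule card_image)
  also have "\<dots> = (\<Prod>i\<le>k. card (B i))" by (simp add: card_PiE)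
  also have "\<dots> = 3^k" by (simp add: lessThan_Suc_atMost[symmetric] B_def)
  finally show ?thesis using lower_gen[OF sub comm, of l] by simp
qed

lemma lower2: "(2*3^k)^l \<le> card (commuting_tuples l (3*k+2))"
proof -
  define B where "B i = (if i < k then {..<3} else {..<2::nat})" for i
  define A where "A = rot k ` PiE {..k} B"
  have sub: "A \<subseteq> Sym (3*k+2)"
  proof
    fix p assume "p \<in> A"
    then obtain c where c: "c \<in> PiE {..k} B" "p = rot k c" unfolding A_def by auto
    have "rot k c permutes {..<3*k+2}" by (intro rot_permutes_gen) (simp add: rot_out)
    then show "p \<in> Sym (3*k+2)" using c unfolding Sym_def by simp
  qed
  have comm: "\<forall>a\<in>A. \<forall>b\<in>A. a \<circ> b = b \<circ> a" unfolding A_def using rot_commute by blast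
  have inj: "inj_on (rot k) (PiE {..k} B)"
    by (rule inj_onI, rule rot_inj) (auto simp: B_def)
  have "card A = card (PiE {..k} B)" unfolding A_def using inj by (rule card_image)
  also have "\<dots> = (\<Prod>i\<le>k. card (B i))" by (simp add: card_PiE)
  also have "\<dots> = 2*3^k" by (simp add: lessThan_Suc_atMost[symmetric] B_def)
  finally show ?thesis using lower_gen[OF sub comm, of l] by simp
qed


lemma delta_neg:
  fixes a b c nn F :: real
  assumes F: "F > 0" and nn: "nn > 0" and ineq: "a^2 * (nn+1) < nn * (b * c)"
  shows "(a / F)^2 - (b / (F / nn)) * (c / ((nn+1) * F)) < 0"
proof -
  have "(a / F)^2 - (b / (F / nn)) * (c / ((nn+1) * F)) = (a^2 * (nn+1) - nn * (b*c)) / ((nn+1) * F^2)"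
  proof -
    have nn1: "nn + 1 \<noteq> 0" using nn by simp
    have "(a / F)^2 = a^2 * (nn+1) / ((nn+1) * F^2)" using F nn1 by (simp add: power2_eq_square)
    moreover have "(b / (F / nn)) * (c / ((nn+1) * F)) = nn * (b*c) / ((nn+1) * F^2)"
      using F nn nn1 by (simp add: power2_eq_square field_simps)
    ultimately show ?thesis by (simp add: diff_divide_distrib)
  qed
  also have "\<dots> < 0" using ineq F nn by (intro divide_neg_pos) auto
  finally show ?thesis .
qed

theorem corollary1p5:
  shows "\<forall>N::nat. \<exists>L::nat. \<exists>n::nat. n \<ge> N \<and> n \<ge> 1 \<and>
           (\<forall>l::nat. l \<ge> 1 \<longrightarrow> l \<ge> L \<longrightarrow> Delta l n < 0)"
proof
  fix N :: nat
  define n where "n = 3*N+1"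
  have n3: "n mod 3 \<noteq> 0" unfolding n_def by simp
  obtain T m where m9: "9 * m^3 \<le> 8 * 3^n" and up: "\<And>l. card (commuting_tuples l n) \<le> T * m^l"
    using upper[OF n3] by blast
  define q where "q = m^2"
  define p :: nat where "p = 2 * 9^N"
  have qp: "q < p"
  proof -
    have "(9 * m^3)^2 \<le> (8 * 3^n)^2" using m9 by (rule power_mono) simp
    then have "81 * m^6 \<le> 64 * 3^(n*2)" by (simp add: power_mult_distrib power_mult[symmetric] flip: power_mult)
    moreover have "(3::nat)^(n*2) = 9^n" using power_mult[of "3::nat" 2 n] by (simp add: mult.commute)
    ultimately have "81 * m^6 \<le> 64 * 9^n" by simp
    moreover have "(9::nat)^n = 9 * 729^N" unfolding n_def by (simp add: power_add power_mult)
    ultimately have "81 * m^6 \<le> 576 * 729^N" by simp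
    moreover have "(729::nat)^N > 0" by simp
    ultimately have "m^6 < 8 * 729^N" by linarith
    moreover have "(9::nat)^(N*3) = 729^N" using power_mult[of "9::nat" 3 N] by (simp add: mult.commute)
    ultimately have "q^3 < p^3" unfolding q_def p_def by (simp add: power_mult_distrib power_mult[symmetric])
    then show ?thesis by (rule power_less_imp_less_base) simp
  qed
  have p0: "p > 0" unfolding p_def by simp
  have lim: "(\<lambda>l. (real T^2 * (real n + 1)) * (real q / real p)^l) \<longlonglongrightarrow> 0"
  proof -
    have "(\<lambda>l. (real q / real p)^l) \<longlonglongrightarrow> 0"
      using qp p0 by (intro LIMSEQ_power_zero) auto
    then show ?thesis by (rule tendsto_mult_right_zero)
  qed
  have "real n > 0" unfolding n_def by simp
  then have "eventually (\<lambda>l. (real T^2 * (real n + 1)) * (real q / real p)^l < real n) sequentially"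
    using lim by (rule order_tendstoD(2)[rotated])
  then obtain L where L: "\<And>l. l \<ge> L \<Longrightarrow> (real T^2 * (real n + 1)) * (real q / real p)^l < real n"
    unfolding eventually_sequentially by blast
  show "\<exists>L n. n \<ge> N \<and> n \<ge> 1 \<and> (\<forall>l. l \<ge> 1 \<longrightarrow> l \<ge> L \<longrightarrow> Delta l n < 0)"
  proof (intro exI conjI allI impI)
    show "n \<ge> N" "n \<ge> 1" unfolding n_def by simp_all
  next
    fix l assume "l \<ge> 1" "l \<ge> L"
    define a where "a = real (card (commuting_tuples l n))"
    define b where "b = real (card (commuting_tuples l (n-1)))"
    define c where "c = real (card (commuting_tuples l (n+1)))"
    have a0: "a \<ge> 0" unfolding a_def by simp
    have aT: "a \<le> real T * real m ^ l" unfolding a_def using up[of l]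
      by (metis of_nat_le_iff of_nat_mult of_nat_power)
    have b3: "b \<ge> real (3^N)^l" unfolding b_def n_def using lower1[of N l]
      by (metis diff_add_inverse2 of_nat_le_iff of_nat_power)
    have c3: "c \<ge> real (2*3^N)^l" unfolding c_def n_def using lower2[of N l]
      by (metis add_Suc_right nat_arith.rule0 numeral_2_eq_2 of_nat_le_iff of_nat_power add_Suc Suc_eq_plus1 one_add_one)
    have "real p ^ l = real (3^N)^l * real (2*3^N)^l"
      unfolding p_def by (simp add: power_mult_distrib[symmetric] power_mult_distrib flip: power_mult)
    also have "\<dots> \<le> b * c" using b3 c3 by (intro mult_mono) (auto simp: b_def)
    finally have pbc: "real p ^ l \<le> b * c" .
    have "a^2 \<le> (real T * real m ^ l)^2" using power_mono[OF aT a0, of 2] .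
    also have "\<dots> = real T^2 * real q ^ l" unfolding q_def by (simp add: power_mult_distrib flip: power_mult) (simp add: mult.commute)
    finally have a2: "a^2 \<le> real T^2 * real q ^ l" .
    have "(real T^2 * (real n + 1)) * (real q / real p)^l * real p ^ l < real n * real p ^ l"
      using L[OF \<open>l \<ge> L\<close>] p0 by (intro mult_strict_right_mono) auto
    then have key2: "real T^2 * (real n + 1) * real q ^ l < real n * real p ^ l"
      using p0 by (simp add: power_divide)
    have "a^2 * (real n + 1) \<le> real T^2 * real q ^ l * (real n + 1)" using a2 by (intro mult_right_mono) auto
    also have "\<dots> < real n * real p ^ l" using key2 by (simp add: mult_ac)
    also have "\<dots> \<le> real n * (b * c)" using pbc by (intro mult_left_mono) auto
    finally have ineq: "a^2 * (real n + 1) < real n * (b * c)" .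
    have F: "fact n > (0::real)" by simp
    have f1: "(fact (n-1) :: real) = fact n / real n" unfolding n_def by (simp add: field_simps)
    have f2: "(fact (n+1) :: real) = (real n + 1) * fact n" by (simp add: algebra_simps)
    have "Delta l n = (a / fact n)^2 - (b / fact (n-1)) * (c / fact (n+1))"
      unfolding Delta_def Ncomm_def a_def b_def c_def card_Sym by (simp only: of_nat_fact)
    also have "\<dots> = (a / fact n)^2 - (b / (fact n / real n)) * (c / ((real n + 1) * fact n))"
      by (simp only: f1 f2)
    also have "\<dots> < 0" using delta_neg[OF F _ ineq] \<open>real n > 0\<close> by simp
    finally show "Delta l n < 0" .
  qed
qed

end
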